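(* Let $Z,X$ be real vector spaces, $\Omega\subseteq Z$ nonempty, $f:Z\to X$, and let $K\subseteq X$ be a nontrivial convex cone with a convex base $B$. If $x_0\in O^s$, then $x_0$ is a VH solution.
   Context: $X'$ is the algebraic dual of $X$. $K$ nontrivial means $K\ne\{0\}$, $K\ne X$. A base of $K$ is a set $B$ with $0\notin B$ such that each $k\in K\setminus\{0\}$ has a unique representation $k=tb$, $t>0$, $b\in B$. $K^{+s}:=\{l\in X':\ l(a)>0\ \forall a\in K\setminus\{0\}\}$. For $l\in X'$, $O_l$ is the set of minimizers of $x\mapsto l(f(x))$ over $\Omega$, and $O^s:=\{x_0\in\Omega:\ \exists l\in K^{+s} \text{ with } x_0\in O_l\}$. $cor(A):=\{x\in A:\ \forall x'\in X\ \exists \lambda'>0 \text{ with } x+\lambda x'\in A\ \forall\lambda\in[0,\lambda']\}$. $x_0\in\Omega$ is a VH solution if there is a pointed convex cone $C\subseteq X$ ($C\cap(-C)=\{0\}$) with $K\setminus\{0\}\subseteq cor(C)$ and $(f(\Omega)-f(x_0))\cap(-C)=\{0\}$. *)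

theory Defs
  imports "HOL-Analysis.Analysis"
begin

definition alg_dual :: "('x::real_vector \<Rightarrow> real) set" where
  "alg_dual = {l. linear l}"

definition nontrivial_cone :: "'x::real_vector set \<Rightarrow> bool" where
  "nontrivial_cone K \<longleftrightarrow> K \<noteq> {0} \<and> K \<noteq> UNIV"

definition is_base :: "'x::real_vector set \<Rightarrow> 'x set \<Rightarrow> bool" where
  "is_base K B \<longleftrightarrow> 0 \<notin> B \<and>
     (\<forall>k \<in> K - {0}. \<exists>!p. fst p > 0 \<and> snd p \<in> B \<and> k = fst p *\<^sub>R snd p)"

definition strict_pos_dual :: "'x::real_vector set \<Rightarrow> ('x \<Rightarrow> real) set" where
  "strict_pos_dual K = {l \<in> alg_dual. \<forall>a \<in> K - {0}. l a > 0}"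

definition O_l :: "('x::real_vector \<Rightarrow> real) \<Rightarrow> ('z \<Rightarrow> 'x) \<Rightarrow> 'z set \<Rightarrow> 'z set" where
  "O_l l f \<Omega> = {x \<in> \<Omega>. \<forall>y \<in> \<Omega>. l (f x) \<le> l (f y)}"

definition O_s :: "'x::real_vector set \<Rightarrow> ('z \<Rightarrow> 'x) \<Rightarrow> 'z set \<Rightarrow> 'z set" where
  "O_s K f \<Omega> = {x0 \<in> \<Omega>. \<exists>l \<in> strict_pos_dual K. x0 \<in> O_l l f \<Omega>}"

definition cor :: "'x::real_vector set \<Rightarrow> 'x set" where
  "cor A = {x \<in> A. \<forall>x'. \<exists>t'>0. \<forall>t\<in>{0..t'}. x + t *\<^sub>R x' \<in> A}"

definition VH_solution :: "'x::real_vector set \<Rightarrow> ('z \<Rightarrow> 'x) \<Rightarrow> 'z set \<Rightarrow> 'z \<Rightarrow> bool" where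
  "VH_solution K f \<Omega> x0 \<longleftrightarrow> x0 \<in> \<Omega> \<and>
     (\<exists>C. convex_cone C \<and> C \<inter> uminus ` C = {0} \<and> K - {0} \<subseteq> cor C \<and>
          (\<lambda>x. f x - f x0) ` \<Omega> \<inter> uminus ` C = {0})"

end

theory Submission
  imports Defs
begin

theorem theorem4p16:
  fixes f :: "'z::real_vector \<Rightarrow> 'x::real_vector"
    and \<Omega> :: "'z set" and K B :: "'x set" and x0 :: 'z
  assumes "\<Omega> \<noteq> {}"
    and "convex_cone K" and "nontrivial_cone K"
    and "is_base K B" and "convex B"
    and "x0 \<in> O_s K f \<Omega>"
  shows "VH_solution K f \<Omega> x0"
proof -
  from assms(6) obtain l where x0: "x0 \<in> \<Omega>" and l: "l \<in> strict_pos_dual K"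
    and mn: "\<forall>y\<in>\<Omega>. l (f x0) \<le> l (f y)"
    unfolding O_s_def O_l_def by auto
  have lin: "linear l" and pos: "\<forall>a\<in>K - {0}. l a > 0"
    using l unfolding strict_pos_dual_def alg_dual_def by auto
  define C where "C = {x. l x > 0} \<union> {0}"
  have ladd: "l (a + b) = l a + l b" and lsc: "l (c *\<^sub>R a) = c * l a"
    and lneg: "l (- a) = - l a" and ldiff: "l (a - b) = l a - l b"
    and l0: "l 0 = 0" for a b c
    using lin by (auto simp: linear_add linear_scale linear_neg linear_diff linear_0)
  have cc: "convex_cone C"
    unfolding convex_cone_def
  proof (intro conjI)
    show "C \<noteq> {}" unfolding C_def by auto
    show "convex C" unfolding convex_def C_def
    proof (intro ballI allI impI)
      fix x y and u v :: real
      assume x: "x \<in> {x. 0 < l x} \<union> {0}" and y: "y \<in> {x. 0 < l x} \<union> {0}"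
        and uv: "0 \<le> u" "0 \<le> v" "u + v = 1"
      have "l x \<ge> 0" "l y \<ge> 0" using x y l0 by auto
      show "u *\<^sub>R x + v *\<^sub>R y \<in> {x. 0 < l x} \<union> {0}"
      proof (cases "l (u *\<^sub>R x + v *\<^sub>R y) > 0")
        case True then show ?thesis by auto
      next
        case False
        hence e: "u * l x + v * l y = 0"
          using \<open>l x \<ge> 0\<close> \<open>l y \<ge> 0\<close> uv by (simp add: ladd lsc) (smt (verit) mult_nonneg_nonneg)
        hence "u * l x = 0" "v * l y = 0"
          using \<open>l x \<ge> 0\<close> \<open>l y \<ge> 0\<close> uv by (smt (verit) mult_nonneg_nonneg)+
        hence "u = 0 \<or> l x = 0" "v = 0 \<or> l y = 0" by simp_all
        hence "u = 0 \<or> x = 0" "v = 0 \<or> y = 0" using x y by force+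
        hence "u *\<^sub>R x = 0" "v *\<^sub>R y = 0" by auto
        thus ?thesis by (simp only: add_0_left UnI2 singletonI)
      qed
    qed
    show "conic C" unfolding conic_def
    proof (intro allI impI)
      fix x and c :: real assume x: "x \<in> C" and c: "0 \<le> c"
      show "c *\<^sub>R x \<in> C"
      proof (cases "c = 0 \<or> x = 0")
        case True thus ?thesis unfolding C_def by auto
      next
        case False
        hence "l x > 0" "c > 0" using x c unfolding C_def by auto
        hence "l (c *\<^sub>R x) > 0" by (simp add: lsc)
        thus ?thesis unfolding C_def by simp
      qed
    qed
  qed
  have pt: "C \<inter> uminus ` C = {0}"
  proof
    show "{0} \<subseteq> C \<inter> uminus ` C" unfolding C_def by (auto intro!: image_eqI[of 0 uminus 0])
    show "C \<inter> uminus ` C \<subseteq> {0}"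
    proof
      fix z assume "z \<in> C \<inter> uminus ` C"
      then obtain c where z: "z \<in> C" "c \<in> C" "z = - c" by auto
      show "z \<in> {0}"
      proof (rule ccontr)
        assume "z \<notin> {0}"
        hence "z \<noteq> 0" "c \<noteq> 0" using z by auto
        hence "l z > 0" "l c > 0" using z unfolding C_def by auto
        moreover have "l z = - l c" using z lneg by simp
        ultimately show False by simp
      qed
    qed
  qed
  have cor: "K - {0} \<subseteq> cor C"
  proof
    fix k assume k: "k \<in> K - {0}"
    hence lk: "l k > 0" using pos by auto
    show "k \<in> cor C" unfolding cor_def
    proof (intro CollectI conjI allI)
      show "k \<in> C" using lk C_def by auto
      fix x'
      define t' where "t' = l k / (\<bar>l x'\<bar> + 1)"
      have t'p: "t' > 0" using lk t'_def by simp
      show "\<exists>t'>0. \<forall>t\<in>{0..t'}. k + t *\<^sub>R x' \<in> C"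
      proof (intro exI[of _ t'] conjI ballI)
        show "t' > 0" by (rule t'p)
        fix t assume t: "t \<in> {0..t'}"
        have "t * \<bar>l x'\<bar> \<le> t' * \<bar>l x'\<bar>" using t by (simp add: mult_right_mono)
        also have "\<dots> < l k"
        proof -
          have "t' * (\<bar>l x'\<bar> + 1) = l k" using t'_def by simp
          hence "t' * \<bar>l x'\<bar> + t' = l k" by (simp add: distrib_left)
          thus ?thesis using t'p by linarith
        qed
        finally have "t * \<bar>l x'\<bar> < l k" .
        moreover have "t * (- \<bar>l x'\<bar>) \<le> t * l x'" using t
          by (intro mult_left_mono) auto
        hence "- (t * \<bar>l x'\<bar>) \<le> t * l x'" by simp
        ultimately have "l (k + t *\<^sub>R x') > 0" by (simp add: ladd lsc)
        thus "k + t *\<^sub>R x' \<in> C" unfolding C_def by simp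
      qed
    qed
  qed
  have last: "(\<lambda>x. f x - f x0) ` \<Omega> \<inter> uminus ` C = {0}"
  proof
    show "{0} \<subseteq> (\<lambda>x. f x - f x0) ` \<Omega> \<inter> uminus ` C"
    proof -
      have "0 \<in> (\<lambda>x. f x - f x0) ` \<Omega>" using x0 by (intro image_eqI[of _ _ x0]) auto
      moreover have "(0::'x) \<in> uminus ` C" unfolding C_def by (intro image_eqI[of _ _ 0]) auto
      ultimately show ?thesis by blast
    qed
    show "(\<lambda>x. f x - f x0) ` \<Omega> \<inter> uminus ` C \<subseteq> {0}"
    proof
      fix z assume "z \<in> (\<lambda>x. f x - f x0) ` \<Omega> \<inter> uminus ` C"
      then obtain y c where y: "y \<in> \<Omega>" "z = f y - f x0" and c: "c \<in> C" "z = - c" by auto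
      have "l z \<ge> 0" using mn y by (simp add: ldiff)
      hence "\<not> l c > 0" using c lneg by (metis neg_less_0_iff_less not_le)
      hence "c = 0" using c C_def by auto
      thus "z \<in> {0}" using c by simp
    qed
  qed
  show ?thesis unfolding VH_solution_def using x0 cc pt cor last by blast
qed

end
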